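(* The infinite matrix $A=[a_{ij}]_{i,j\in\mathbb N}$ with $a_{ij}=1$ if $j\in\{i,i+1\}$ and $a_{ij}=0$ otherwise has Schur norm $\|A\|_\bullet=4/\pi$.
   Context: Fix $\mathbb F\in\{\mathbb R,\mathbb C\}$. For an infinite matrix $A$, the Schur norm is $\|A\|_\bullet=\sup\{\|A\bullet X\|: X\in\mathcal B(\ell^2),\ \|X\|\le1\}$, where $A\bullet X=[a_{ij}x_{ij}]$ is the entrywise product and $\|\cdot\|$ is the operator norm on $\ell^2=\ell^2(\mathbb N,\mathbb F)$ (with value $\infty$ if some $A\bullet X$ is unbounded). *)

theory Defs
  imports "HOL-Analysis.Analysis"
begin

text \<open>The operator norm on l2 of an infinite matrix X is
taken (extended-real valued, possibly infinity) as the supremum of the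
operator norms of its finite n x n leading sections, i.e. the supremum of
the l2 norm of X x over finitely supported vectors x of l2 norm at most 1.
This is the operator norm of X as an element of B(l2) when X is bounded,
and infinity otherwise.\<close>

definition mat_op_norm :: "(nat \<Rightarrow> nat \<Rightarrow> 'a::real_normed_field) \<Rightarrow> ereal" where
  "mat_op_norm X =
     (SUP n. SUP x \<in> {x :: nat \<Rightarrow> 'a. (\<Sum>j<n. (norm (x j))^2) \<le> 1}.
        ereal (sqrt (\<Sum>i<n. (norm (\<Sum>j<n. X i j * x j))^2)))"

definition schur_prod :: "(nat \<Rightarrow> nat \<Rightarrow> 'a::times) \<Rightarrow> (nat \<Rightarrow> nat \<Rightarrow> 'a) \<Rightarrow> nat \<Rightarrow> nat \<Rightarrow> 'a" where
  "schur_prod A X = (\<lambda>i j. A i j * X i j)"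

definition schur_norm :: "(nat \<Rightarrow> nat \<Rightarrow> 'a::real_normed_field) \<Rightarrow> ereal" where
  "schur_norm A = (SUP X \<in> {X. mat_op_norm X \<le> 1}. mat_op_norm (schur_prod A X))"

definition bidiag_ones :: "nat \<Rightarrow> nat \<Rightarrow> 'a::zero_neq_one" where
  "bidiag_ones i j = (if j = i \<or> j = i + 1 then 1 else 0)"

end

theory Submission
  imports Defs "HOL-Real_Asymp.Real_Asymp"
begin

lemma lim_W: "(\<lambda>M. 2 / (real M * sin (pi / (2 * real M)))) \<longlonglongrightarrow> 4 / pi"
  by real_asymp

lemma lim_sq: "(\<lambda>N. sqrt ((real N - 1) / real N)) \<longlonglongrightarrow> 1"
  by real_asymp

lemma orth:
  fixes M :: nat and l :: int
  assumes M: "M > 0" and l: "\<bar>l\<bar> < int M"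
  shows "(\<Sum>k<M. cis (2 * pi * real k * of_int l / real M)) = (if l = 0 then of_nat M else 0)"
proof (cases "l = 0")
  case True then show ?thesis by simp
next
  case False
  define z where "z = cis (2 * pi * of_int l / real M)"
  have zk: "cis (2 * pi * real k * of_int l / real M) = z ^ k" for k
  proof -
    have "z ^ k = cis (real k * (2 * pi * of_int l / real M))" unfolding z_def by (rule Complex.DeMoivre)
    moreover have "real k * (2 * pi * of_int l / real M) = 2 * pi * real k * of_int l / real M" by simp
    ultimately show ?thesis by (simp only:)
  qed
  have zM: "z ^ M = 1"
  proof -
    have "z ^ M = cis (real M * (2 * pi * of_int l / real M))" unfolding z_def by (rule Complex.DeMoivre)
    also have "real M * (2 * pi * of_int l / real M) = 2 * pi * of_int l" using M by simp
    finally show ?thesis by simp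
  qed
  have z1: "z \<noteq> 1"
  proof
    assume "z = 1"
    then have "cos (2 * pi * of_int l / real M) = 1" unfolding z_def
      by (metis complex.sel(1) cis.sel(1) one_complex.sel(1))
    then obtain m :: int where m: "2 * pi * of_int l / real M = of_int m * 2 * pi"
      using cos_one_2pi_int by blast
    then have "of_int l = of_int m * real M" using M by (simp add: field_simps)
    then have "l = m * int M" by (metis of_int_eq_iff of_int_mult of_int_of_nat_eq)
    with l False show False
      by (cases "m = 0") (auto simp: abs_mult)
  qed
  have "(\<Sum>k<M. cis (2 * pi * real k * of_int l / real M)) = (\<Sum>k<M. z ^ k)"
    by (simp add: zk)
  also have "\<dots> = 0" using z1 zM by (simp add: sum_gp_strict)
  finally show ?thesis using False by simp
qed

definition th :: "nat \<Rightarrow> nat \<Rightarrow> real" where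
  "th M k = - pi + (2 * real k + 1) * pi / real M"

lemma orth2:
  fixes M :: nat and l :: int
  assumes M: "M > 0" and l: "\<bar>l\<bar> < int M"
  shows "(\<Sum>k<M. cis (of_int l * th M k)) = (if l = 0 then of_nat M else 0)"
proof -
  have "cis (of_int l * th M k) = cis (of_int l * (- pi + pi / real M)) * cis (2 * pi * real k * of_int l / real M)" for k
    unfolding cis_mult th_def using M by (simp add: field_simps)
  then have "(\<Sum>k<M. cis (of_int l * th M k)) = cis (of_int l * (- pi + pi / real M)) * (\<Sum>k<M. cis (2 * pi * real k * of_int l / real M))"
    by (simp add: sum_distrib_left)
  then show ?thesis using orth[OF assms] by simp
qed

lemma sin_sum: "(\<Sum>k<M. sin ((2 * real k + 1) * x)) * sin x = (sin (real M * x))^2"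
proof (induction M)
  case 0 then show ?case by simp
next
  case (Suc M)
  have "sin ((2 * real M + 1) * x) * sin x = (sin ((real M + 1) * x))^2 - (sin (real M * x))^2"
  proof -
    have a: "(2 * real M + 1) * x = (real M + 1) * x + real M * x" by algebra
    have b: "x = (real M + 1) * x - real M * x" by algebra
    have c: "sin ((2 * real M + 1) * x) * sin x = (cos ((2 * real M + 1) * x - x) - cos ((2 * real M + 1) * x + x)) / 2"
      by (simp add: cos_diff cos_add)
    have d: "(2 * real M + 1) * x - x = 2 * (real M * x)" "(2 * real M + 1) * x + x = 2 * ((real M + 1) * x)"
      by algebra+
    show ?thesis unfolding c d cos_double_sin by simp
  qed
  then show ?case using Suc by (simp add: distrib_right add.commute)
qed

lemma cos_th: "k < M \<Longrightarrow> cos (th M k / 2) = sin ((2 * real k + 1) * (pi / (2 * real M)))"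
proof -
  assume "k < M"
  then have M: "real M > 0" by simp
  have "th M k / 2 = (2 * real k + 1) * (pi / (2 * real M)) - pi / 2"
    unfolding th_def using M by (simp add: field_simps)
  then show ?thesis by (simp only:) (simp add: cos_diff)
qed

lemma cos_th_pos: "k < M \<Longrightarrow> cos (th M k / 2) > 0"
proof -
  assume k: "k < M"
  then have M: "real M > 0" by simp
  have "(2 * real k + 1) * (pi / (2 * real M)) < pi"
  proof -
    have "2 * real k + 1 < 2 * real M" using k by simp
    then have "(2 * real k + 1) * (pi / (2 * real M)) < (2 * real M) * (pi / (2 * real M))"
      by (intro mult_strict_right_mono) (use M in auto)
    then show ?thesis using M by simp
  qed
  moreover have "0 < (2 * real k + 1) * (pi / (2 * real M))" using M by simp
  ultimately show ?thesis using k by (simp add: cos_th sin_gt_zero)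
qed

lemma sum_cos_th:
  fixes M :: nat
  assumes "M > 0"
  shows "(\<Sum>k<M. cos (th M k / 2)) = 1 / sin (pi / (2 * real M))"
proof -
  have s: "sin (pi / (2 * real M)) > 0" using assms
    by (intro sin_gt_zero) (auto simp: field_simps)
  have "(\<Sum>k<M. cos (th M k / 2)) * sin (pi / (2 * real M)) = (sin (real M * (pi / (2 * real M))))^2"
    using sin_sum[where M=M and x="pi / (2 * real M)"] by (simp add: cos_th)
  also have "real M * (pi / (2 * real M)) = pi / 2" using assms by simp
  finally show ?thesis using s by (simp add: field_simps)
qed


lemma parseval:
  fixes u :: "nat \<Rightarrow> nat \<Rightarrow> complex" and a :: "nat \<Rightarrow> complex" and c :: real
  assumes orth: "\<And>k k'. k < K \<Longrightarrow> k' < K \<Longrightarrow> (\<Sum>i<N. u k i * cnj (u k' i)) = (if k = k' then of_real c else 0)"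
  shows "(\<Sum>i<N. (cmod (\<Sum>k<K. a k * u k i))^2) = c * (\<Sum>k<K. (cmod (a k))^2)"
proof -
  have "complex_of_real (\<Sum>i<N. (cmod (\<Sum>k<K. a k * u k i))^2)
     = (\<Sum>i<N. (\<Sum>k<K. a k * u k i) * cnj (\<Sum>k<K. a k * u k i))"
    by (simp only: of_real_sum complex_norm_square)
  also have "\<dots> = (\<Sum>i<N. \<Sum>k<K. \<Sum>k'<K. a k * cnj (a k') * (u k i * cnj (u k' i)))"
    unfolding cnj_sum sum_product complex_cnj_mult by (intro sum.cong refl) (simp only: mult_ac)
  also have "\<dots> = (\<Sum>k<K. \<Sum>k'<K. a k * cnj (a k') * (\<Sum>i<N. u k i * cnj (u k' i)))"
    by (simp add: sum_distrib_left sum.swap[of _ "{..<N}"])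
  also have "\<dots> = (\<Sum>k<K. \<Sum>k'<K. a k * cnj (a k') * (if k = k' then of_real c else 0))"
    by (intro sum.cong refl) (simp add: orth)
  also have "\<dots> = (\<Sum>k<K. a k * cnj (a k) * of_real c)"
    by (simp add: if_distrib cong: if_cong)
  also have "\<dots> = complex_of_real (c * (\<Sum>k<K. (cmod (a k))^2))"
    unfolding of_real_mult of_real_sum sum_distrib_left complex_norm_square by (simp only: mult_ac)
  finally show ?thesis by (simp only: of_real_eq_iff)
qed


definition ee :: "nat \<Rightarrow> nat \<Rightarrow> nat \<Rightarrow> complex" where
  "ee M k i = cis (real i * th M k)"

definition Cm :: "nat \<Rightarrow> nat \<Rightarrow> nat \<Rightarrow> complex" where
  "Cm M i j = (\<Sum>k<M. cis (th M k / 2) * ee M k i * cnj (ee M k j)) / of_nat M"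

lemma ee_orth1:
  assumes "k < M" "k' < M"
  shows "(\<Sum>i<M. ee M k i * cnj (ee M k' i)) = (if k = k' then of_nat M else 0)"
proof -
  have M: "M > 0" using assms by simp
  have "ee M k i * cnj (ee M k' i) = cis (2 * pi * real i * of_int (int k - int k') / real M)" for i
    unfolding ee_def cis_cnj cis_mult
    by (rule arg_cong[where f=cis]) (use M in \<open>simp add: th_def field_simps\<close>)
  then have "(\<Sum>i<M. ee M k i * cnj (ee M k' i)) = (\<Sum>i<M. cis (2 * pi * real i * of_int (int k - int k') / real M))"
    by simp
  also have "\<dots> = (if int k - int k' = 0 then of_nat M else 0)"
    by (rule orth) (use assms in auto)
  finally show ?thesis by simp
qed

lemma ee_orth2:
  assumes "j < M" "j' < M"
  shows "(\<Sum>k<M. cnj (ee M k j) * cnj (cnj (ee M k j'))) = (if j = j' then of_nat M else 0)"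
proof -
  have M: "M > 0" using assms by simp
  have "cnj (ee M k j) * cnj (cnj (ee M k j')) = cis (of_int (int j' - int j) * th M k)" for k
    unfolding ee_def cis_cnj cis_mult complex_cnj_cnj
    by (rule arg_cong[where f=cis]) (simp add: algebra_simps)
  then have "(\<Sum>k<M. cnj (ee M k j) * cnj (cnj (ee M k j'))) = (\<Sum>k<M. cis (of_int (int j' - int j) * th M k))"
    by simp
  also have "\<dots> = (if int j' - int j = 0 then of_nat M else 0)"
    by (rule orth2) (use assms in auto)
  finally show ?thesis by auto
qed

lemma Cm_unitary:
  assumes M: "M > 0"
  shows "(\<Sum>i<M. (cmod (\<Sum>j<M. Cm M i j * y j))^2) = (\<Sum>j<M. (cmod (y j))^2)"
proof -
  define F where "F k = (\<Sum>j<M. y j * cnj (ee M k j))" for k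
  define a where "a k = cis (th M k / 2) * F k / of_nat M" for k
  have eq: "(\<Sum>j<M. Cm M i j * y j) = (\<Sum>k<M. a k * ee M k i)" for i
  proof -
    have "(\<Sum>j<M. Cm M i j * y j) = (\<Sum>j<M. \<Sum>k<M. cis (th M k / 2) * ee M k i * cnj (ee M k j) * y j / of_nat M)"
      unfolding Cm_def by (simp add: sum_divide_distrib sum_distrib_right)
    also have "\<dots> = (\<Sum>k<M. \<Sum>j<M. cis (th M k / 2) * ee M k i * cnj (ee M k j) * y j / of_nat M)"
      by (rule sum.swap)
    also have "\<dots> = (\<Sum>k<M. a k * ee M k i)"
      unfolding a_def F_def by (simp add: sum_divide_distrib sum_distrib_left sum_distrib_right mult_ac)
    finally show ?thesis .
  qed
  have "(\<Sum>i<M. (cmod (\<Sum>j<M. Cm M i j * y j))^2) = (\<Sum>i<M. (cmod (\<Sum>k<M. a k * ee M k i))^2)"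
    by (simp add: eq)
  also have "\<dots> = real M * (\<Sum>k<M. (cmod (a k))^2)"
    by (rule parseval) (subst ee_orth1, assumption+, simp)
  also have "\<dots> = (\<Sum>k<M. (cmod (F k))^2) / real M"
    using M by (simp add: a_def norm_mult norm_divide sum_divide_distrib power_divide power2_eq_square sum_distrib_left)
  also have "(\<Sum>k<M. (cmod (F k))^2) = real M * (\<Sum>j<M. (cmod (y j))^2)"
    unfolding F_def by (rule parseval) (subst ee_orth2, assumption+, simp)
  finally show ?thesis using M by simp
qed

lemma Cm_entries:
  "Re (Cm M i i + Cm M i (Suc i)) = 2 * (\<Sum>k<M. cos (th M k / 2)) / real M"
proof -
  have a: "cis (th M k / 2) * ee M k i * cnj (ee M k i) = cis (th M k / 2)" for k
    unfolding ee_def cis_cnj mult.assoc cis_mult by simp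
  have b: "cis (th M k / 2) * ee M k i * cnj (ee M k (Suc i)) = cis (- (th M k / 2))" for k
    unfolding ee_def cis_cnj mult.assoc cis_mult by (simp add: algebra_simps)
  show ?thesis
    unfolding Cm_def a b by (simp add: Re_divide_of_nat add_divide_distrib)
qed


lemma mat_op_norm_le:
  fixes X :: "nat \<Rightarrow> nat \<Rightarrow> 'a::real_normed_field"
  assumes c: "c \<ge> 0"
    and H: "\<And>n x. (\<Sum>i<n. (norm (\<Sum>j<n. X i j * x j))^2) \<le> c^2 * (\<Sum>j<n. (norm (x j))^2)"
  shows "mat_op_norm X \<le> ereal c"
  unfolding mat_op_norm_def
proof (intro SUP_least)
  fix n and x :: "nat \<Rightarrow> 'a"
  assume "x \<in> {x. (\<Sum>j<n. (norm (x j))^2) \<le> 1}"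
  then have s: "(\<Sum>j<n. (norm (x j))^2) \<le> 1" by simp
  have "(\<Sum>i<n. (norm (\<Sum>j<n. X i j * x j))^2) \<le> c^2 * 1"
    using H[where n=n and x=x] mult_left_mono[OF s, of "c^2"] by simp
  then have "sqrt (\<Sum>i<n. (norm (\<Sum>j<n. X i j * x j))^2) \<le> sqrt (c^2)"
    by (intro real_sqrt_le_mono) simp
  then show "ereal (sqrt (\<Sum>i<n. (norm (\<Sum>j<n. X i j * x j))^2)) \<le> ereal c" using c by simp
qed

lemma mat_op_norm_ge:
  fixes X :: "nat \<Rightarrow> nat \<Rightarrow> 'a::real_normed_field"
  assumes "(\<Sum>j<n. (norm (x j))^2) \<le> 1"
  shows "ereal (sqrt (\<Sum>i<n. (norm (\<Sum>j<n. X i j * x j))^2)) \<le> mat_op_norm X"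
  unfolding mat_op_norm_def
  by (rule SUP_upper2[of n]) (use assms in \<open>auto intro!: SUP_upper\<close>)

lemma mat_op_norm_le1D:
  fixes X :: "nat \<Rightarrow> nat \<Rightarrow> 'a::real_normed_field"
  assumes X: "mat_op_norm X \<le> 1"
  shows "(\<Sum>i<n. (norm (\<Sum>j<n. X i j * x j))^2) \<le> (\<Sum>j<n. (norm (x j))^2)"
proof (cases "(\<Sum>j<n. (norm (x j))^2) = 0")
  case True
  then have "\<forall>j\<in>{..<n}. x j = 0" by (simp add: sum_nonneg_eq_0_iff)
  then show ?thesis by simp
next
  case False
  define s where "s = (\<Sum>j<n. (norm (x j))^2)"
  have s0: "s > 0" using False unfolding s_def by (simp add: order_less_le sum_nonneg)
  define t where "t = sqrt s"
  have t0: "t > 0" unfolding t_def using s0 by simp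
  have ts: "t^2 = s" unfolding t_def using s0 by simp
  define x' where "x' j = x j / of_real t" for j
  have "(\<Sum>j<n. (norm (x' j))^2) = s / t^2"
    unfolding x'_def s_def using t0 by (simp add: norm_divide power_divide sum_divide_distrib)
  then have n1: "(\<Sum>j<n. (norm (x' j))^2) \<le> 1" using ts s0 by simp
  have "(\<Sum>i<n. (norm (\<Sum>j<n. X i j * x' j))^2) = (\<Sum>i<n. (norm (\<Sum>j<n. X i j * x j))^2) / t^2"
  proof -
    have "(\<Sum>j<n. X i j * x' j) = (\<Sum>j<n. X i j * x j) / of_real t" for i
      unfolding x'_def by (simp add: sum_divide_distrib)
    then have "(norm (\<Sum>j<n. X i j * x' j))^2 = (norm (\<Sum>j<n. X i j * x j))^2 / t^2" for i
      using t0 by (simp add: norm_divide power_divide)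
    then show ?thesis by (simp add: sum_divide_distrib)
  qed
  moreover have "ereal (sqrt (\<Sum>i<n. (norm (\<Sum>j<n. X i j * x' j))^2)) \<le> 1"
    using order_trans[OF mat_op_norm_ge[OF n1, of X] X] by simp
  ultimately have "sqrt ((\<Sum>i<n. (norm (\<Sum>j<n. X i j * x j))^2) / s) \<le> 1"
    using ts by simp
  then have "(\<Sum>i<n. (norm (\<Sum>j<n. X i j * x j))^2) / s \<le> 1" by simp
  then show ?thesis using s0 unfolding s_def by (simp add: divide_le_eq_1)
qed


lemma sum_cos_int:
  fixes M :: nat and l :: int
  assumes "M > 0" "\<bar>l\<bar> < int M"
  shows "(\<Sum>k<M. cos (of_int l * th M k)) = (if l = 0 then real M else 0)"
proof -
  have "(\<Sum>k<M. cos (of_int l * th M k)) = Re (\<Sum>k<M. cis (of_int l * th M k))" by simp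
  also have "\<dots> = (if l = 0 then real M else 0)" using orth2[OF assms] by simp
  finally show ?thesis .
qed

lemma quad:
  fixes M n i j :: nat
  assumes M: "M > n" and i: "i < n" and j: "j < n"
  shows "(bidiag_ones i j :: real) =
    (\<Sum>k<M. (2 * cos (th M k / 2) / real M) *
        (cos (real i * th M k) * cos ((real j - 1/2) * th M k) + sin (real i * th M k) * sin ((real j - 1/2) * th M k)))"
proof -
  define m where "m = int j - int i"
  have M0: "M > 0" using M by simp
  have e: "(2 * cos (th M k / 2) / real M) *
        (cos (real i * th M k) * cos ((real j - 1/2) * th M k) + sin (real i * th M k) * sin ((real j - 1/2) * th M k))
      = (cos (of_int m * th M k) + cos (of_int (m - 1) * th M k)) / real M" for k
  proof -
    have a: "cos (real i * th M k) * cos ((real j - 1/2) * th M k) + sin (real i * th M k) * sin ((real j - 1/2) * th M k)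
        = cos ((real j - 1/2) * th M k - real i * th M k)"
      by (simp add: cos_diff mult.commute)
    have b: "2 * cos (x/2) * cos y = cos (y + x/2) + cos (y - x/2)" for x y :: real
      by (simp add: cos_add cos_diff)
    have c: "(real j - 1/2) * th M k - real i * th M k + th M k / 2 = of_int m * th M k"
      "(real j - 1/2) * th M k - real i * th M k - th M k / 2 = of_int (m - 1) * th M k"
      unfolding m_def by (simp_all add: algebra_simps)
    have d: "2 * cos (th M k / 2) * cos ((real j - 1/2) * th M k - real i * th M k) = cos (of_int m * th M k) + cos (of_int (m - 1) * th M k)"
      using b[of "th M k" "(real j - 1/2) * th M k - real i * th M k"] unfolding c .
    show ?thesis unfolding a using d by (simp add: divide_simps mult_ac)
  qed
  have "(\<Sum>k<M. (2 * cos (th M k / 2) / real M) *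
        (cos (real i * th M k) * cos ((real j - 1/2) * th M k) + sin (real i * th M k) * sin ((real j - 1/2) * th M k)))
     = ((\<Sum>k<M. cos (of_int m * th M k)) + (\<Sum>k<M. cos (of_int (m - 1) * th M k))) / real M"
    unfolding e sum.distrib[symmetric] sum_divide_distrib ..
  also have "\<dots> = ((if m = 0 then real M else 0) + (if m - 1 = 0 then real M else 0)) / real M"
    using M i j unfolding m_def by (subst sum_cos_int, simp, linarith)+ simp
  also have "\<dots> = (bidiag_ones i j :: real)"
    using M0 unfolding m_def bidiag_ones_def by auto
  finally show ?thesis by simp
qed

lemma L2_sum_le:
  fixes V :: "nat \<Rightarrow> nat \<Rightarrow> 'a::real_normed_vector"
  assumes "finite K" "\<And>k. k \<in> K \<Longrightarrow> w k \<ge> 0"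
  shows "L2_set (\<lambda>i. norm (\<Sum>k\<in>K. w k *\<^sub>R V k i)) A \<le> (\<Sum>k\<in>K. w k * L2_set (\<lambda>i. norm (V k i)) A)"
  using assms
proof (induction K rule: finite_induct)
  case empty then show ?case by (simp add: L2_set_def)
next
  case (insert k K)
  have "L2_set (\<lambda>i. norm (\<Sum>k\<in>insert k K. w k *\<^sub>R V k i)) A
      = L2_set (\<lambda>i. norm (w k *\<^sub>R V k i + (\<Sum>k\<in>K. w k *\<^sub>R V k i))) A"
    using insert by simp
  also have "\<dots> \<le> L2_set (\<lambda>i. w k * norm (V k i) + norm (\<Sum>k\<in>K. w k *\<^sub>R V k i)) A"
    by (rule L2_set_mono) (use insert in \<open>auto intro: order_trans[OF norm_triangle_ineq]\<close>)
  also have "\<dots> \<le> L2_set (\<lambda>i. w k * norm (V k i)) A + L2_set (\<lambda>i. norm (\<Sum>k\<in>K. w k *\<^sub>R V k i)) A"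
    by (rule L2_set_triangle_ineq)
  also have "\<dots> \<le> w k * L2_set (\<lambda>i. norm (V k i)) A + (\<Sum>k\<in>K. w k * L2_set (\<lambda>i. norm (V k i)) A)"
    using insert by (simp add: L2_set_right_distrib)
  finally show ?case using insert by simp
qed

lemma cs_bound:
  fixes p q :: "'a::real_normed_vector"
  assumes "c^2 + s^2 = 1"
  shows "(norm (c *\<^sub>R p + s *\<^sub>R q))^2 \<le> (norm p)^2 + (norm q)^2"
proof -
  have "norm (c *\<^sub>R p + s *\<^sub>R q) \<le> \<bar>c\<bar> * norm p + \<bar>s\<bar> * norm q"
    by (metis norm_scaleR norm_triangle_ineq)
  then have "(norm (c *\<^sub>R p + s *\<^sub>R q))^2 \<le> (\<bar>c\<bar> * norm p + \<bar>s\<bar> * norm q)^2"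
    by (intro power_mono) auto
  also have "\<dots> \<le> (\<bar>c\<bar>^2 + \<bar>s\<bar>^2) * ((norm p)^2 + (norm q)^2)"
  proof -
    have "0 \<le> (\<bar>c\<bar> * norm q - \<bar>s\<bar> * norm p)^2" by simp
    then show ?thesis by (simp add: power2_eq_square algebra_simps del: abs_mult_self_eq)
  qed
  finally show ?thesis using assms by simp
qed


lemma bid_of_real: "(bidiag_ones i j :: 'a::real_normed_field) = of_real (bidiag_ones i j)"
  by (simp add: bidiag_ones_def)

lemma upper_section:
  fixes X :: "nat \<Rightarrow> nat \<Rightarrow> 'a::real_normed_field" and x :: "nat \<Rightarrow> 'a"
  assumes X: "mat_op_norm X \<le> 1" and M: "M > n"
  shows "(\<Sum>i<n. (norm (\<Sum>j<n. schur_prod bidiag_ones X i j * x j))^2)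
     \<le> (2 / (real M * sin (pi / (2 * real M))))^2 * (\<Sum>j<n. (norm (x j))^2)"
proof -
  have M0: "M > 0" using M by simp
  define w where "w k = 2 * cos (th M k / 2) / real M" for k
  define cc where "cc k i = cos (real i * th M k)" for k i
  define ss where "ss k i = sin (real i * th M k)" for k i
  define cd where "cd k j = cos ((real j - 1/2) * th M k)" for k j
  define sd where "sd k j = sin ((real j - 1/2) * th M k)" for k j
  define P where "P k i = (\<Sum>j<n. X i j * (of_real (cd k j) * x j))" for k i
  define Q where "Q k i = (\<Sum>j<n. X i j * (of_real (sd k j) * x j))" for k i
  define V where "V k i = cc k i *\<^sub>R P k i + ss k i *\<^sub>R Q k i" for k i
  define T where "T k i j = of_real (w k) * (of_real (cc k i) * (X i j * (of_real (cd k j) * x j))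
      + of_real (ss k i) * (X i j * (of_real (sd k j) * x j)))" for k i j
  define nx where "nx = (\<Sum>j<n. (norm (x j))^2)"
  have rep: "(\<Sum>j<n. schur_prod bidiag_ones X i j * x j) = (\<Sum>k<M. w k *\<^sub>R V k i)" if i: "i < n" for i
  proof -
    have "(\<Sum>j<n. schur_prod bidiag_ones X i j * x j) = (\<Sum>j<n. \<Sum>k<M. T k i j)"
    proof (intro sum.cong refl)
      fix j assume "j \<in> {..<n}"
      then have j: "j < n" by simp
      have "schur_prod bidiag_ones X i j * x j
          = of_real (\<Sum>k<M. w k * (cc k i * cd k j + ss k i * sd k j)) * X i j * x j"
      proof -
        have "(bidiag_ones i j :: 'a) = of_real (bidiag_ones i j :: real)" by (rule bid_of_real)
        also have "(bidiag_ones i j :: real) = (\<Sum>k<M. w k * (cc k i * cd k j + ss k i * sd k j))"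
          unfolding quad[OF M i j] w_def cc_def cd_def ss_def sd_def ..
        finally show ?thesis unfolding schur_prod_def by simp
      qed
      also have "\<dots> = (\<Sum>k<M. T k i j)"
        unfolding T_def of_real_sum sum_distrib_right
        by (intro sum.cong refl) (simp add: algebra_simps)
      finally show "schur_prod bidiag_ones X i j * x j = (\<Sum>k<M. T k i j)" .
    qed
    also have "\<dots> = (\<Sum>k<M. \<Sum>j<n. T k i j)" by (rule sum.swap)
    also have "\<dots> = (\<Sum>k<M. w k *\<^sub>R V k i)"
      unfolding V_def P_def Q_def T_def scaleR_conv_of_real
      by (simp only: sum_distrib_left sum.distrib[symmetric])
    finally show ?thesis .
  qed
  have Vb: "L2_set (\<lambda>i. norm (V k i)) {..<n} \<le> sqrt nx" for k
  proof -
    have "(\<Sum>i<n. (norm (V k i))^2) \<le> (\<Sum>i<n. (norm (P k i))^2 + (norm (Q k i))^2)"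
      unfolding V_def cc_def ss_def by (intro sum_mono cs_bound) simp
    also have "\<dots> = (\<Sum>i<n. (norm (P k i))^2) + (\<Sum>i<n. (norm (Q k i))^2)" by (simp add: sum.distrib)
    also have "\<dots> \<le> (\<Sum>j<n. (norm (of_real (cd k j) * x j))^2) + (\<Sum>j<n. (norm (of_real (sd k j) * x j))^2)"
      unfolding P_def Q_def by (intro add_mono mat_op_norm_le1D[OF X])
    also have "\<dots> = nx"
      unfolding nx_def sum.distrib[symmetric]
      by (intro sum.cong refl) (simp add: norm_mult power_mult_distrib cd_def sd_def flip: distrib_right)
    finally show ?thesis unfolding L2_set_def by (simp add: real_sqrt_le_mono)
  qed
  have wpos: "w k \<ge> 0" if "k \<in> {..<M}" for k
    unfolding w_def using cos_th_pos[of k M] that by simp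
  have W: "(\<Sum>k<M. w k) = 2 / (real M * sin (pi / (2 * real M)))"
    unfolding w_def using sum_cos_th[OF M0] by (simp add: sum_divide_distrib[symmetric] sum_distrib_left[symmetric])
  have "L2_set (\<lambda>i. norm (\<Sum>j<n. schur_prod bidiag_ones X i j * x j)) {..<n}
      = L2_set (\<lambda>i. norm (\<Sum>k<M. w k *\<^sub>R V k i)) {..<n}"
    by (rule L2_set_cong) (simp_all add: rep)
  also have "\<dots> \<le> (\<Sum>k<M. w k * L2_set (\<lambda>i. norm (V k i)) {..<n})"
    by (rule L2_sum_le) (simp_all add: wpos)
  also have "\<dots> \<le> (\<Sum>k<M. w k * sqrt nx)"
    by (intro sum_mono mult_left_mono Vb wpos)
  also have "\<dots> = 2 / (real M * sin (pi / (2 * real M))) * sqrt nx"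
    by (simp add: W flip: sum_distrib_right)
  finally have L: "L2_set (\<lambda>i. norm (\<Sum>j<n. schur_prod bidiag_ones X i j * x j)) {..<n}
      \<le> 2 / (real M * sin (pi / (2 * real M))) * sqrt nx" .
  have "(\<Sum>i<n. (norm (\<Sum>j<n. schur_prod bidiag_ones X i j * x j))^2)
      = (L2_set (\<lambda>i. norm (\<Sum>j<n. schur_prod bidiag_ones X i j * x j)) {..<n})^2"
    unfolding L2_set_def by (simp add: sum_nonneg)
  also have "\<dots> \<le> (2 / (real M * sin (pi / (2 * real M))) * sqrt nx)^2"
    by (intro power_mono L) simp
  also have "\<dots> = (2 / (real M * sin (pi / (2 * real M))))^2 * nx"
  proof -
    have "nx \<ge> 0" unfolding nx_def by (simp add: sum_nonneg)
    then show ?thesis by (simp only: power_mult_distrib real_sqrt_pow2)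
  qed
  finally show ?thesis unfolding nx_def .
qed


lemma schur_upper_X:
  fixes X :: "nat \<Rightarrow> nat \<Rightarrow> 'a::real_normed_field"
  assumes X: "mat_op_norm X \<le> 1"
  shows "mat_op_norm (schur_prod bidiag_ones X) \<le> ereal (4 / pi)"
proof (rule mat_op_norm_le)
  show "0 \<le> 4 / pi" by simp
  fix n and x :: "nat \<Rightarrow> 'a"
  have lim: "(\<lambda>M. (2 / (real M * sin (pi / (2 * real M))))^2 * (\<Sum>j<n. (norm (x j))^2))
      \<longlonglongrightarrow> (4 / pi)^2 * (\<Sum>j<n. (norm (x j))^2)"
    by (intro tendsto_intros lim_W)
  show "(\<Sum>i<n. (norm (\<Sum>j<n. schur_prod bidiag_ones X i j * x j))^2) \<le> (4 / pi)^2 * (\<Sum>j<n. (norm (x j))^2)"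
    by (rule LIMSEQ_le_const[OF lim]) (use upper_section[OF X] in \<open>auto intro!: exI[of _ "Suc n"]\<close>)
qed

lemma schur_upper: "schur_norm (bidiag_ones :: nat \<Rightarrow> nat \<Rightarrow> 'a::real_normed_field) \<le> ereal (4 / pi)"
  unfolding schur_norm_def by (rule SUP_least) (simp add: schur_upper_X)

lemma lower_gen:
  fixes X :: "nat \<Rightarrow> nat \<Rightarrow> 'a::real_normed_field"
  assumes N: "N > 0" and c: "c \<ge> 0" and H: "\<And>i. Suc i < N \<Longrightarrow> c \<le> norm (X i i + X i (Suc i))"
  shows "ereal (sqrt ((real N - 1) / real N) * c) \<le> mat_op_norm (schur_prod bidiag_ones X)"
proof -
  define x :: "nat \<Rightarrow> 'a" where "x j = of_real (1 / sqrt (real N))" for j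
  have nx: "(\<Sum>j<N. (norm (x j))^2) \<le> 1"
    unfolding x_def norm_of_real using N by (simp add: power_divide)
  have row: "(\<Sum>j<N. schur_prod bidiag_ones X i j * x j) = (X i i + X i (Suc i)) * of_real (1 / sqrt (real N))"
    if i: "Suc i < N" for i
  proof -
    have "(\<Sum>j<N. schur_prod bidiag_ones X i j * x j) = (\<Sum>j<N. if j \<in> {i, Suc i} then X i j * x j else 0)"
      by (intro sum.cong refl) (auto simp: schur_prod_def bidiag_ones_def)
    also have "\<dots> = (\<Sum>j\<in>{..<N} \<inter> {i, Suc i}. X i j * x j)"
      by (rule sum.inter_restrict[symmetric]) simp
    also have "{..<N} \<inter> {i, Suc i} = {i, Suc i}" using i by auto
    finally show ?thesis unfolding x_def by (simp add: distrib_right add_divide_distrib)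
  qed
  have "(real N - 1) / real N * c^2 = (\<Sum>i<N - 1. c^2 / real N)"
    using N by (simp add: of_nat_diff)
  also have "\<dots> \<le> (\<Sum>i<N - 1. (norm (\<Sum>j<N. schur_prod bidiag_ones X i j * x j))^2)"
  proof (intro sum_mono)
    fix i assume "i \<in> {..<N - 1}"
    then have i: "Suc i < N" by auto
    have "c^2 \<le> (norm (X i i + X i (Suc i)))^2" using H[OF i] c by (intro power_mono) auto
    then show "c^2 / real N \<le> (norm (\<Sum>j<N. schur_prod bidiag_ones X i j * x j))^2"
    proof -
      have "(norm (\<Sum>j<N. schur_prod bidiag_ones X i j * x j))^2 = (norm (X i i + X i (Suc i)))^2 / real N"
        unfolding row[OF i] norm_mult norm_of_real power_mult_distrib using N by (simp add: power_divide)
      then show ?thesis using \<open>c^2 \<le> _\<close> by (simp add: divide_right_mono)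
    qed
  qed
  also have "\<dots> \<le> (\<Sum>i<N. (norm (\<Sum>j<N. schur_prod bidiag_ones X i j * x j))^2)"
    by (rule sum_mono2) auto
  finally have le: "(real N - 1) / real N * c^2 \<le> (\<Sum>i<N. (norm (\<Sum>j<N. schur_prod bidiag_ones X i j * x j))^2)" .
  have "sqrt ((real N - 1) / real N) * c = sqrt ((real N - 1) / real N * c^2)"
    using c by (simp only: real_sqrt_mult real_sqrt_abs abs_of_nonneg flip: real_sqrt_power[of c 2])
  also have "\<dots> \<le> sqrt (\<Sum>i<N. (norm (\<Sum>j<N. schur_prod bidiag_ones X i j * x j))^2)"
    using le by (rule real_sqrt_le_mono)
  finally have "ereal (sqrt ((real N - 1) / real N) * c) \<le> ereal (sqrt (\<Sum>i<N. (norm (\<Sum>j<N. schur_prod bidiag_ones X i j * x j))^2))"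
    by simp
  also have "\<dots> \<le> mat_op_norm (schur_prod bidiag_ones X)"
    by (rule mat_op_norm_ge[OF nx])
  finally show ?thesis .
qed

lemma sum_trunc_le:
  fixes f :: "nat \<Rightarrow> real"
  assumes "\<And>i. 0 \<le> f i" "\<And>i. i \<ge> N \<Longrightarrow> f i = 0"
  shows "sum f {..<n} \<le> sum f {..<N}"
proof -
  have "sum f {..<n} \<le> sum f {..<max n N}" by (rule sum_mono2) (auto simp: assms)
  also have "\<dots> = sum f {..<N}" by (rule sum.mono_neutral_right) (auto simp: assms)
  finally show ?thesis .
qed

lemma sum_trunc_eq:
  fixes h :: "nat \<Rightarrow> 'b::comm_monoid_add"
  assumes "\<And>j. j \<ge> m \<Longrightarrow> h j = 0" "m \<le> n"
  shows "sum h {..<n} = sum h {..<m}"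
  by (rule sum.mono_neutral_right) (use assms in auto)

definition XN :: "nat \<Rightarrow> nat \<Rightarrow> nat \<Rightarrow> complex" where
  "XN N i j = (if i < N \<and> j < N then Cm N i j else 0)"

definition XR :: "nat \<Rightarrow> nat \<Rightarrow> nat \<Rightarrow> real" where
  "XR N i j = Re (XN N i j)"

lemma XN_bound:
  assumes N: "N > 0"
  shows "(\<Sum>i<n. (cmod (\<Sum>j<n. XN N i j * x j))^2) \<le> (\<Sum>j<n. (cmod (x j))^2)"
proof -
  define y where "y j = (if j < n then x j else 0)" for j
  define m where "m = min n N"
  have inner: "(\<Sum>j<n. XN N i j * x j) = (\<Sum>j<N. Cm N i j * y j)" if i: "i < N" for i
  proof -
    define h where "h j = (if j < n \<and> j < N then Cm N i j * x j else 0)" for j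
    have "(\<Sum>j<n. XN N i j * x j) = (\<Sum>j<n. h j)"
      by (intro sum.cong refl) (auto simp: XN_def h_def i)
    also have "\<dots> = (\<Sum>j<m. h j)" by (rule sum_trunc_eq) (auto simp: h_def m_def)
    also have "\<dots> = (\<Sum>j<N. h j)" by (rule sum_trunc_eq[symmetric]) (auto simp: h_def m_def)
    also have "\<dots> = (\<Sum>j<N. Cm N i j * y j)"
      by (intro sum.cong refl) (auto simp: y_def h_def)
    finally show ?thesis .
  qed
  have "(\<Sum>i<n. (cmod (\<Sum>j<n. XN N i j * x j))^2) \<le> (\<Sum>i<N. (cmod (\<Sum>j<n. XN N i j * x j))^2)"
    by (rule sum_trunc_le) (auto simp: XN_def)
  also have "\<dots> = (\<Sum>i<N. (cmod (\<Sum>j<N. Cm N i j * y j))^2)"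
    by (intro sum.cong refl) (simp add: inner)
  also have "\<dots> = (\<Sum>j<N. (cmod (y j))^2)" by (rule Cm_unitary[OF N])
  also have "\<dots> \<le> (\<Sum>j<n. (cmod (y j))^2)" by (rule sum_trunc_le) (auto simp: y_def)
  also have "\<dots> = (\<Sum>j<n. (cmod (x j))^2)" by (intro sum.cong refl) (simp add: y_def)
  finally show ?thesis .
qed

lemma XN_norm: "N > 0 \<Longrightarrow> mat_op_norm (XN N) \<le> 1"
  using mat_op_norm_le[of 1 "XN N"] XN_bound by (simp add: one_ereal_def)

lemma XR_norm:
  assumes N: "N > 0"
  shows "mat_op_norm (XR N) \<le> 1"
proof -
  have "(\<Sum>i<n. (norm (\<Sum>j<n. XR N i j * x j))^2) \<le> 1^2 * (\<Sum>j<n. (norm (x j))^2)" for n x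
  proof -
    have e: "(\<Sum>j<n. XR N i j * x j) = Re (\<Sum>j<n. XN N i j * of_real (x j))" for i
      by (simp add: XR_def)
    have "(\<Sum>i<n. (norm (\<Sum>j<n. XR N i j * x j))^2) \<le> (\<Sum>i<n. (cmod (\<Sum>j<n. XN N i j * of_real (x j)))^2)"
      unfolding e real_norm_def by (intro sum_mono power_mono abs_Re_le_cmod) simp
    also have "\<dots> \<le> (\<Sum>j<n. (cmod (of_real (x j)))^2)" by (rule XN_bound[OF N])
    finally show ?thesis by simp
  qed
  then show ?thesis using mat_op_norm_le[of 1 "XR N"] by (simp add: one_ereal_def)
qed

lemma h_val: "N > 0 \<Longrightarrow> 2 * (\<Sum>k<N. cos (th N k / 2)) / real N = 2 / (real N * sin (pi / (2 * real N)))"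
  by (simp add: sum_cos_th)

lemma h_nonneg: "N > 0 \<Longrightarrow> 0 \<le> 2 / (real N * sin (pi / (2 * real N)))"
proof -
  assume N: "N > 0"
  have "sin (pi / (2 * real N)) > 0" using N by (intro sin_gt_zero) (auto simp: field_simps)
  then show ?thesis by simp
qed

lemma lower_C:
  assumes N: "N > 0"
  shows "ereal (sqrt ((real N - 1) / real N) * (2 / (real N * sin (pi / (2 * real N)))))
       \<le> schur_norm (bidiag_ones :: nat \<Rightarrow> nat \<Rightarrow> complex)"
proof -
  have "ereal (sqrt ((real N - 1) / real N) * (2 / (real N * sin (pi / (2 * real N)))))
      \<le> mat_op_norm (schur_prod bidiag_ones (XN N))"
  proof (rule lower_gen[OF N h_nonneg[OF N]])
    fix i assume i: "Suc i < N"
    have xe: "XN N i i + XN N i (Suc i) = Cm N i i + Cm N i (Suc i)" using i by (simp add: XN_def)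
    have "2 / (real N * sin (pi / (2 * real N))) = Re (XN N i i + XN N i (Suc i))"
      unfolding xe Cm_entries h_val[OF N] ..
    also have "\<dots> \<le> cmod (XN N i i + XN N i (Suc i))" by (rule complex_Re_le_cmod)
    finally show "2 / (real N * sin (pi / (2 * real N))) \<le> norm (XN N i i + XN N i (Suc i))" by simp
  qed
  also have "\<dots> \<le> schur_norm (bidiag_ones :: nat \<Rightarrow> nat \<Rightarrow> complex)"
    unfolding schur_norm_def by (rule SUP_upper) (simp add: XN_norm[OF N])
  finally show ?thesis .
qed

lemma lower_R:
  assumes N: "N > 0"
  shows "ereal (sqrt ((real N - 1) / real N) * (2 / (real N * sin (pi / (2 * real N)))))
       \<le> schur_norm (bidiag_ones :: nat \<Rightarrow> nat \<Rightarrow> real)"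
proof -
  have "ereal (sqrt ((real N - 1) / real N) * (2 / (real N * sin (pi / (2 * real N)))))
      \<le> mat_op_norm (schur_prod bidiag_ones (XR N))"
  proof (rule lower_gen[OF N h_nonneg[OF N]])
    fix i assume i: "Suc i < N"
    have xe: "XN N i i + XN N i (Suc i) = Cm N i i + Cm N i (Suc i)" using i by (simp add: XN_def)
    have xr: "XR N i i + XR N i (Suc i) = Re (XN N i i + XN N i (Suc i))" by (simp add: XR_def)
    have "2 / (real N * sin (pi / (2 * real N))) = XR N i i + XR N i (Suc i)"
      unfolding xr xe Cm_entries h_val[OF N] ..
    then show "2 / (real N * sin (pi / (2 * real N))) \<le> norm (XR N i i + XR N i (Suc i))" by simp
  qed
  also have "\<dots> \<le> schur_norm (bidiag_ones :: nat \<Rightarrow> nat \<Rightarrow> real)"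
    unfolding schur_norm_def by (rule SUP_upper) (simp add: XR_norm[OF N])
  finally show ?thesis .
qed

lemma lim_lower: "(\<lambda>N. ereal (sqrt ((real N - 1) / real N) * (2 / (real N * sin (pi / (2 * real N)))))) \<longlonglongrightarrow> ereal (4 / pi)"
proof -
  have "(\<lambda>N. sqrt ((real N - 1) / real N) * (2 / (real N * sin (pi / (2 * real N))))) \<longlonglongrightarrow> 1 * (4 / pi)"
    by (intro tendsto_mult lim_sq lim_W)
  then show ?thesis by (simp add: lim_ereal)
qed

theorem corollary4p6:
  shows "schur_norm (bidiag_ones :: nat \<Rightarrow> nat \<Rightarrow> real) = ereal (4 / pi)
       \<and> schur_norm (bidiag_ones :: nat \<Rightarrow> nat \<Rightarrow> complex) = ereal (4 / pi)"
proof
  have "ereal (4 / pi) \<le> schur_norm (bidiag_ones :: nat \<Rightarrow> nat \<Rightarrow> real)"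
    by (rule LIMSEQ_le_const2[OF lim_lower]) (use lower_R in \<open>auto intro!: exI[of _ 1]\<close>)
  then show "schur_norm (bidiag_ones :: nat \<Rightarrow> nat \<Rightarrow> real) = ereal (4 / pi)"
    by (intro antisym schur_upper)
next
  have "ereal (4 / pi) \<le> schur_norm (bidiag_ones :: nat \<Rightarrow> nat \<Rightarrow> complex)"
    by (rule LIMSEQ_le_const2[OF lim_lower]) (use lower_C in \<open>auto intro!: exI[of _ 1]\<close>)
  then show "schur_norm (bidiag_ones :: nat \<Rightarrow> nat \<Rightarrow> complex) = ereal (4 / pi)"
    by (intro antisym schur_upper)
qed

end
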